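(* Let $m\ge1$ and let $1\le K\le N\le 2^m-1$ be integers. Define the bit-level decoding radius $$e^*=\min\Big\{\sum_{i=0}^m i\,a_i \;:\; a_0,\dots,a_m\in\mathbb{Z}_{\ge0},\ \sum_{i=0}^m a_i=N,\ \sum_{i=0}^m a_i2^{-i}\le K-1\Big\}.$$ Then $e^*=2(N-K+1)$ if $K\ge \frac12N+1$, and $e^*=3N-4(K-1)$ if $\frac14N+1\le K\le\frac12N+1$.
   Context: Setting: a Reed–Solomon code of length $N$ and dimension $K$ over $GF(2^m)$ whose symbols are sent as $m$ bits each over a binary erasure channel. $a_i$ is the number of received symbols with exactly $i$ erased bits ("type $i$"), so $\sum_i i a_i$ is the total number of erased bits. Under the proportional multiplicity assignment (each of the $2^i$ candidates of a type-$i$ symbol gets multiplicity $M2^{-i}$), the algebraic soft decoding sufficient condition $S\ge\sqrt{2(K-1)C}$, with score $S=\sum_i a_i M2^{-i}$ and cost $C=\frac12\sum_i a_i2^i(M2^{-i})^2$, is equivalent to $\eta=\sum_i a_i2^{-i}\ge K-1$; $e^*$ is the smallest number of erased bits for which the erasure pattern can bring $\eta$ down to at most $K-1$. *)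

theory Defs
  imports Complex_Main
begin

definition e_star :: "nat \<Rightarrow> nat \<Rightarrow> nat \<Rightarrow> nat" where
  "e_star m N K = Min {(\<Sum>i\<le>m. i * a i) | a :: nat \<Rightarrow> nat.
      (\<Sum>i\<le>m. a i) = N \<and> (\<Sum>i\<le>m. real (a i) / 2 ^ i) \<le> real K - 1}"

end

theory Submission
  imports Defs
begin

lemma sum_sup1:
  fixes f :: "nat \<Rightarrow> 'a::comm_monoid_add"
  assumes "m \<ge> 1" "\<And>i. i \<ge> 2 \<Longrightarrow> f i = 0"
  shows "sum f {..m} = f 0 + f 1"
  using assms(1)
proof (induction m)
  case 0 then show ?case by simp
next
  case (Suc m)
  show ?case
  proof (cases "m = 0")
    case True then show ?thesis by simp
  next
    case False
    then have "sum f {..m} = f 0 + f 1" using Suc by simp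
    then show ?thesis using assms(2)[of "Suc m"] False by simp
  qed
qed

lemma sum_sup2:
  fixes f :: "nat \<Rightarrow> 'a::comm_monoid_add"
  assumes "m \<ge> 2" "\<And>i. i \<ge> 3 \<Longrightarrow> f i = 0"
  shows "sum f {..m} = f 0 + f 1 + f 2"
  using assms(1)
proof (induction m)
  case 0 then show ?case by simp
next
  case (Suc m)
  show ?case
  proof (cases "m = 1")
    case True then show ?thesis by (simp add: numeral_2_eq_2)
  next
    case False
    then have "sum f {..m} = f 0 + f 1 + f 2" using Suc by simp
    then show ?thesis using assms(2)[of "Suc m"] False Suc.prems by simp
  qed
qed

lemma lower:
  fixes a :: "nat \<Rightarrow> nat" and c d :: real
  assumes "\<And>i. real i \<ge> c - d / 2 ^ i" "d \<ge> 0"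
    and "(\<Sum>i\<le>m. a i) = N" "(\<Sum>i\<le>m. real (a i) / 2 ^ i) \<le> real K - 1"
  shows "real (\<Sum>i\<le>m. i * a i) \<ge> c * N - d * (real K - 1)"
proof -
  have "(\<Sum>i\<le>m. (c - d / 2 ^ i) * real (a i)) \<le> (\<Sum>i\<le>m. real i * real (a i))"
    by (intro sum_mono mult_right_mono assms(1)) auto
  moreover have "(\<Sum>i\<le>m. (c - d / 2 ^ i) * real (a i))
      = c * real N - d * (\<Sum>i\<le>m. real (a i) / 2 ^ i)"
  proof -
    have "(\<Sum>i\<le>m. (c - d / 2 ^ i) * real (a i))
        = (\<Sum>i\<le>m. c * real (a i)) - (\<Sum>i\<le>m. d * (real (a i) / 2 ^ i))"
      by (simp add: sum_subtractf[symmetric] algebra_simps)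
    also have "\<dots> = c * real N - d * (\<Sum>i\<le>m. real (a i) / 2 ^ i)"
      by (simp add: sum_distrib_left[symmetric] assms(3)[symmetric] times_divide_eq_right[symmetric] del: times_divide_eq_right)
    finally show ?thesis .
  qed
  moreover have "d * (\<Sum>i\<le>m. real (a i) / 2 ^ i) \<le> d * (real K - 1)"
    using assms(2,4) by (rule mult_left_mono[rotated])
  ultimately show ?thesis by simp
qed

lemma fin_set:
  "finite {(\<Sum>i\<le>m. i * a i) | a :: nat \<Rightarrow> nat.
      (\<Sum>i\<le>m. a i) = N \<and> (\<Sum>i\<le>m. real (a i) / 2 ^ i) \<le> real K - 1}"
proof (rule finite_subset[of _ "{..m*N}"])
  show "{(\<Sum>i\<le>m. i * a i) | a :: nat \<Rightarrow> nat.
      (\<Sum>i\<le>m. a i) = N \<and> (\<Sum>i\<le>m. real (a i) / 2 ^ i) \<le> real K - 1} \<subseteq> {..m*N}"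
  proof (rule subsetI)
    fix x assume "x \<in> {(\<Sum>i\<le>m. i * a i) | a :: nat \<Rightarrow> nat.
      (\<Sum>i\<le>m. a i) = N \<and> (\<Sum>i\<le>m. real (a i) / 2 ^ i) \<le> real K - 1}"
    then obtain a :: "nat \<Rightarrow> nat" where xa: "x = (\<Sum>i\<le>m. i * a i)" and aN: "(\<Sum>i\<le>m. a i) = N" by blast
    have "(\<Sum>i\<le>m. i * a i) \<le> (\<Sum>i\<le>m. m * a i)"
      by (intro sum_mono mult_right_mono) auto
    also have "(\<Sum>i\<le>m. m * a i) = m * (\<Sum>i\<le>m. a i)"
      by (rule sum_distrib_left[symmetric])
    also have "\<dots> = m * N" using aN by simp
    finally have "(\<Sum>i\<le>m. i * a i) \<le> m*N" .
    then show "x \<in> {..m*N}"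
      using xa by simp
  qed
qed simp

theorem theorem1:
  fixes m N K :: nat
  assumes "m \<ge> 1" and "1 \<le> K" and "K \<le> N" and "N \<le> 2 ^ m - 1"
  shows "(real K \<ge> real N / 2 + 1 \<longrightarrow> int (e_star m N K) = 2 * (int N - int K + 1))
       \<and> (real N / 4 + 1 \<le> real K \<and> real K \<le> real N / 2 + 1
            \<longrightarrow> int (e_star m N K) = 3 * int N - 4 * (int K - 1))"
proof (intro conjI impI)
  let ?S = "{(\<Sum>i\<le>m. i * a i) | a :: nat \<Rightarrow> nat.
      (\<Sum>i\<le>m. a i) = N \<and> (\<Sum>i\<le>m. real (a i) / 2 ^ i) \<le> real K - 1}"
  {
    assume h: "real K \<ge> real N / 2 + 1"
    define a :: "nat \<Rightarrow> nat" where
      "a = (\<lambda>i. if i = 0 then N - 2 * (N - K + 1) else if i = 1 then 2 * (N - K + 1) else 0)"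
    have le: "2 * (N - K + 1) \<le> N"
    proof -
      have "real (2 * (N - K + 1)) \<le> real N" using h assms by (simp add: of_nat_diff)
      then show ?thesis by (simp only: of_nat_le_iff)
    qed
    have s1: "(\<Sum>i\<le>m. a i) = N"
      using sum_sup1[OF assms(1), of a] le by (simp add: a_def)
    have s2: "(\<Sum>i\<le>m. real (a i) / 2 ^ i) \<le> real K - 1"
      using sum_sup1[OF assms(1), of "\<lambda>i. real (a i) / 2 ^ i"] le assms
      by (simp add: a_def of_nat_diff) (simp add: field_simps)
    have s3: "(\<Sum>i\<le>m. i * a i) = 2 * (N - K + 1)"
      using sum_sup1[OF assms(1), of "\<lambda>i. i * a i"] by (simp add: a_def)
    have mem: "2 * (N - K + 1) \<in> ?S" unfolding mem_Collect_eq by (rule exI[of _ a]) (use s1 s2 s3 in auto)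
    have lb: "\<forall>y\<in>?S. 2 * (N - K + 1) \<le> y"
    proof
      fix y assume "y \<in> ?S"
      then obtain b :: "nat \<Rightarrow> nat" where y: "y = (\<Sum>i\<le>m. i * b i)"
        and b1: "(\<Sum>i\<le>m. b i) = N" and b2: "(\<Sum>i\<le>m. real (b i) / 2 ^ i) \<le> real K - 1"
        by blast
      have ineq: "real i \<ge> 2 - 2 / 2 ^ i" for i :: nat
      proof (cases "i \<ge> 2")
        case True
        have "(0::real) \<le> 2 / 2 ^ i" by simp
        moreover have "(2::real) \<le> real i" using True by simp
        ultimately show ?thesis by linarith
      next
        case False then have "i = 0 \<or> i = 1" by auto
        then show ?thesis by auto
      qed
      have "real y \<ge> 2 * N - 2 * (real K - 1)"
        using lower[of 2 2 b m N K, OF ineq _ b1 b2] y by simp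
      then show "2 * (N - K + 1) \<le> y" using assms by (simp add: of_nat_diff)
    qed
    have "e_star m N K = 2 * (N - K + 1)"
      unfolding e_star_def by (rule Min_eqI[OF fin_set]) (use lb mem in auto)
    then show "int (e_star m N K) = 2 * (int N - int K + 1)" using assms by simp
  }
  {
    assume h12: "real N / 4 + 1 \<le> real K \<and> real K \<le> real N / 2 + 1"
    then have h1: "real N / 4 + 1 \<le> real K" and h2: "real K \<le> real N / 2 + 1" by auto
    have K2: "K \<ge> 2" using h1 assms by linarith
    have m2: "m \<ge> 2"
    proof (rule ccontr)
      assume "\<not> m \<ge> 2" then have "m = 1" using assms by auto
      then show False using assms K2 by simp
    qed
    define a :: "nat \<Rightarrow> nat" where
      "a = (\<lambda>i. if i = 1 then 4 * (K - 1) - N else if i = 2 then 2 * N - 4 * (K - 1) else 0)"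
    have le1: "N \<le> 4 * (K - 1)"
    proof -
      have "real N \<le> real (4 * (K - 1))" using h1 K2 by (simp add: of_nat_diff)
      then show ?thesis by (simp only: of_nat_le_iff)
    qed
    have le2: "4 * (K - 1) \<le> 2 * N"
    proof -
      have "real (4 * (K - 1)) \<le> real (2 * N)" using h2 K2 by (simp add: of_nat_diff)
      then show ?thesis by (simp only: of_nat_le_iff)
    qed
    have s1: "(\<Sum>i\<le>m. a i) = N"
      using sum_sup2[OF m2, of a] le1 le2 by (simp add: a_def)
    have s2: "(\<Sum>i\<le>m. real (a i) / 2 ^ i) \<le> real K - 1"
      using sum_sup2[OF m2, of "\<lambda>i. real (a i) / 2 ^ i"] le1 le2 K2
      by (simp add: a_def of_nat_diff) (simp add: field_simps)
    have s3: "(\<Sum>i\<le>m. i * a i) = 3 * N - 4 * (K - 1)"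
      using sum_sup2[OF m2, of "\<lambda>i. i * a i"] le1 le2 by (simp add: a_def) arith
    have mem: "3 * N - 4 * (K - 1) \<in> ?S" unfolding mem_Collect_eq by (rule exI[of _ a]) (use s1 s2 s3 in auto)
    have lb: "\<forall>y\<in>?S. 3 * N - 4 * (K - 1) \<le> y"
    proof
      fix y assume "y \<in> ?S"
      then obtain b :: "nat \<Rightarrow> nat" where y: "y = (\<Sum>i\<le>m. i * b i)"
        and b1: "(\<Sum>i\<le>m. b i) = N" and b2: "(\<Sum>i\<le>m. real (b i) / 2 ^ i) \<le> real K - 1"
        by blast
      have ineq: "real i \<ge> 3 - 4 / 2 ^ i" for i :: nat
      proof (cases "i \<ge> 3")
        case True
        have "(0::real) \<le> 4 / 2 ^ i" by simp
        moreover have "(3::real) \<le> real i" using True by simp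
        ultimately show ?thesis by linarith
      next
        case False then have "i = 0 \<or> i = 1 \<or> i = 2" by auto
        then show ?thesis by auto
      qed
      have "real y \<ge> 3 * N - 4 * (real K - 1)"
        using lower[of 3 4 b m N K, OF ineq _ b1 b2] y by simp
      then show "3 * N - 4 * (K - 1) \<le> y" using assms le1 le2 K2 by (simp add: of_nat_diff)
    qed
    have "e_star m N K = 3 * N - 4 * (K - 1)"
      unfolding e_star_def by (rule Min_eqI[OF fin_set]) (use lb mem in auto)
    then show "int (e_star m N K) = 3 * int N - 4 * (int K - 1)" using le1 le2 K2 by (simp add: of_nat_diff)
  }
qed

end
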